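(* Let $G$ be a connected bipartite graph with vertex set $\{u_1,\dots,u_n\}$, $n\ge2$, and let $\mathcal{H}=\{H_1,\dots,H_n\}$ be a family of graphs such that $H_i\notin\mathcal{G}$ for some $i$. Then $\dim_l(G\circ\mathcal{H})=\sum_{i=1}^n\operatorname{adim}_l(H_i)$.
   Context: All graphs are finite and simple with at least one vertex. $d_G$ is shortest-path distance ($+\infty$ between components), $d_{G,2}=\min\{d_G,2\}$; $s$ distinguishes $x,y$ w.r.t. $d$ if $d(s,x)\ne d(s,y)$. $\dim_l(G)$: minimum size of $S\subseteq V(G)$ such that any two adjacent vertices are distinguished w.r.t. $d_G$ by some vertex of $S$. $\operatorname{adim}_l(H)$: minimum size of $S\subseteq V(H)$ such that any two adjacent vertices are distinguished w.r.t. $d_{H,2}$ by some vertex of $S$; minimum such sets are local adjacency bases. $\mathcal{G}$: class of graphs $H$ such that every local adjacency basis $B$ of $H$ satisfies $B\subseteq N_H(v)$ for some $v\in V(H)$. Lexicographic product $G\circ\mathcal{H}$: vertex set $\bigcup_i\{u_i\}\times V(H_i)$, $(u_i,v)\sim(u_j,w)$ iff $u_iu_j\in E(G)$, or $i=j$ and $vw\in E(H_i)$. *)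

theory Defs
  imports Main "HOL-Library.Extended_Nat"
begin

text \<open>A graph is a pair (V, E) of a vertex set and a set of ordered pairs (edges, both orientations).\<close>
type_synonym 'a graph = "'a set \<times> ('a \<times> 'a) set"

definition verts :: "'a graph \<Rightarrow> 'a set" where "verts G = fst G"
definition edges :: "'a graph \<Rightarrow> ('a \<times> 'a) set" where "edges G = snd G"

definition adj :: "'a graph \<Rightarrow> 'a \<Rightarrow> 'a \<Rightarrow> bool" where
  "adj G x y \<longleftrightarrow> (x, y) \<in> edges G"

definition simple_graph :: "'a graph \<Rightarrow> bool" where
  "simple_graph G \<longleftrightarrow> finite (verts G) \<and> verts G \<noteq> {} \<and>
     edges G \<subseteq> verts G \<times> verts G \<and>
     (\<forall>x y. (x, y) \<in> edges G \<longrightarrow> (y, x) \<in> edges G) \<and>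
     (\<forall>x. (x, x) \<notin> edges G)"

definition walk :: "'a graph \<Rightarrow> 'a list \<Rightarrow> bool" where
  "walk G xs \<longleftrightarrow> xs \<noteq> [] \<and> set xs \<subseteq> verts G \<and>
     (\<forall>i. Suc i < length xs \<longrightarrow> adj G (xs ! i) (xs ! Suc i))"

definition dist :: "'a graph \<Rightarrow> 'a \<Rightarrow> 'a \<Rightarrow> enat" where
  "dist G x y = (if \<exists>xs. walk G xs \<and> hd xs = x \<and> last xs = y
     then enat (LEAST n. \<exists>xs. walk G xs \<and> hd xs = x \<and> last xs = y \<and> length xs = Suc n)
     else \<infinity>)"

definition dist2 :: "'a graph \<Rightarrow> 'a \<Rightarrow> 'a \<Rightarrow> enat" where
  "dist2 G x y = min (dist G x y) 2"

definition connected :: "'a graph \<Rightarrow> bool" where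
  "connected G \<longleftrightarrow> (\<forall>x\<in>verts G. \<forall>y\<in>verts G. dist G x y \<noteq> \<infinity>)"

definition bipartite :: "'a graph \<Rightarrow> bool" where
  "bipartite G \<longleftrightarrow> (\<exists>A. \<forall>x y. (x, y) \<in> edges G \<longrightarrow> (x \<in> A \<longleftrightarrow> y \<notin> A))"

definition neighbors :: "'a graph \<Rightarrow> 'a \<Rightarrow> 'a set" where
  "neighbors G v = {w. adj G v w}"

definition local_resolving :: "'a graph \<Rightarrow> ('a \<Rightarrow> 'a \<Rightarrow> enat) \<Rightarrow> 'a set \<Rightarrow> bool" where
  "local_resolving G d S \<longleftrightarrow> S \<subseteq> verts G \<and>
     (\<forall>x y. adj G x y \<longrightarrow> (\<exists>s\<in>S. d s x \<noteq> d s y))"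

definition local_metric_dim :: "'a graph \<Rightarrow> nat" where
  "local_metric_dim G = Min {card S | S. local_resolving G (dist G) S}"

definition local_adj_dim :: "'a graph \<Rightarrow> nat" where
  "local_adj_dim H = Min {card S | S. local_resolving H (dist2 H) S}"

definition local_adj_basis :: "'a graph \<Rightarrow> 'a set \<Rightarrow> bool" where
  "local_adj_basis H B \<longleftrightarrow> local_resolving H (dist2 H) B \<and> card B = local_adj_dim H"

definition classG :: "'a graph \<Rightarrow> bool" where
  "classG H \<longleftrightarrow> (\<forall>B. local_adj_basis H B \<longrightarrow> (\<exists>v\<in>verts H. B \<subseteq> neighbors H v))"

definition lex_prod :: "'a graph \<Rightarrow> ('a \<Rightarrow> 'b graph) \<Rightarrow> ('a \<times> 'b) graph" where
  "lex_prod G H =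
    ((SIGMA u:verts G. verts (H u)),
     {((u, v), (u', w)) | u v u' w.
        u \<in> verts G \<and> v \<in> verts (H u) \<and> u' \<in> verts G \<and> w \<in> verts (H u') \<and>
        (adj G u u' \<or> (u = u' \<and> adj (H u) v w))})"

end

theory Submission
  imports Defs
begin

lemma walk_Nil[simp]: "\<not> walk \<Gamma> []"
  unfolding walk_def by simp

lemma walk_single[simp]: "walk \<Gamma> [a] \<longleftrightarrow> a \<in> verts \<Gamma>"
  unfolding walk_def by simp

lemma walk_Cons2: "walk \<Gamma> (a # b # xs) \<longleftrightarrow> a \<in> verts \<Gamma> \<and> adj \<Gamma> a b \<and> walk \<Gamma> (b # xs)"
  unfolding walk_def
  by (auto simp: nth_Cons split: nat.splits)

lemma dist_le_walk: "walk \<Gamma> xs \<Longrightarrow> dist \<Gamma> (hd xs) (last xs) \<le> enat (length xs - 1)"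
proof -
  assume w: "walk \<Gamma> xs"
  then have ne: "xs \<noteq> []" by (simp add: walk_def)
  have ex: "\<exists>ys. walk \<Gamma> ys \<and> hd ys = hd xs \<and> last ys = last xs" using w by blast
  have "(LEAST n. \<exists>ys. walk \<Gamma> ys \<and> hd ys = hd xs \<and> last ys = last xs \<and> length ys = Suc n) \<le> length xs - 1"
    apply (rule Least_le) using w ne by auto
  then show ?thesis unfolding dist_def using ex by simp
qed

lemma dist_obtain: "dist \<Gamma> a b = enat n \<Longrightarrow> \<exists>xs. walk \<Gamma> xs \<and> hd xs = a \<and> last xs = b \<and> length xs = Suc n"
proof -
  assume d: "dist \<Gamma> a b = enat n"
  then have ex: "\<exists>xs. walk \<Gamma> xs \<and> hd xs = a \<and> last xs = b" unfolding dist_def by (auto split: if_splits)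
  then obtain xs where xs: "walk \<Gamma> xs" "hd xs = a" "last xs = b" by blast
  then have "length xs = Suc (length xs - 1)" by (cases xs) (auto simp: walk_def)
  then have ex2: "\<exists>m ys. walk \<Gamma> ys \<and> hd ys = a \<and> last ys = b \<and> length ys = Suc m" using xs by blast
  have "n = (LEAST m. \<exists>ys. walk \<Gamma> ys \<and> hd ys = a \<and> last ys = b \<and> length ys = Suc m)"
    using d ex unfolding dist_def by simp
  then show ?thesis using LeastI_ex[OF ex2] by simp
qed

lemma dist_ge: "(\<And>xs. walk \<Gamma> xs \<Longrightarrow> hd xs = a \<Longrightarrow> last xs = b \<Longrightarrow> Suc m \<le> length xs) \<Longrightarrow> enat m \<le> dist \<Gamma> a b"
proof (cases "dist \<Gamma> a b")
  case (enat n)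
  assume h: "\<And>xs. walk \<Gamma> xs \<Longrightarrow> hd xs = a \<Longrightarrow> last xs = b \<Longrightarrow> Suc m \<le> length xs"
  from dist_obtain[OF enat] obtain xs where "walk \<Gamma> xs" "hd xs = a" "last xs = b" "length xs = Suc n" by blast
  then show ?thesis using h enat by fastforce
qed simp

lemma dist_refl: "a \<in> verts \<Gamma> \<Longrightarrow> dist \<Gamma> a a = 0"
proof -
  assume "a \<in> verts \<Gamma>"
  then have "dist \<Gamma> a a \<le> 0" using dist_le_walk[of \<Gamma> "[a]"] by (simp add: zero_enat_def)
  then show ?thesis by simp
qed

lemma dist_adj: "a \<noteq> b \<Longrightarrow> adj \<Gamma> a b \<Longrightarrow> a \<in> verts \<Gamma> \<Longrightarrow> b \<in> verts \<Gamma> \<Longrightarrow> dist \<Gamma> a b = 1"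
proof -
  assume h: "a \<noteq> b" "adj \<Gamma> a b" "a \<in> verts \<Gamma>" "b \<in> verts \<Gamma>"
  have "dist \<Gamma> a b \<le> enat 1" using dist_le_walk[of \<Gamma> "[a,b]"] h by (simp add: walk_Cons2)
  moreover have "enat 1 \<le> dist \<Gamma> a b"
  proof (rule dist_ge)
    fix xs assume "walk \<Gamma> xs" "hd xs = a" "last xs = b"
    then show "Suc 1 \<le> length xs" using h
      by (cases xs; cases "tl xs") (auto simp: walk_def)
  qed
  ultimately show ?thesis by (simp add: one_enat_def)
qed

lemma dist_nonadj: "a \<noteq> b \<Longrightarrow> \<not> adj \<Gamma> a b \<Longrightarrow> 2 \<le> dist \<Gamma> a b"
proof -
  assume h: "a \<noteq> b" "\<not> adj \<Gamma> a b"
  have "enat 2 \<le> dist \<Gamma> a b"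
  proof (rule dist_ge)
    fix xs assume "walk \<Gamma> xs" "hd xs = a" "last xs = b"
    then show "Suc 2 \<le> length xs" using h
      by (cases xs; cases "tl xs"; cases "tl (tl xs)") (auto simp: walk_Cons2)
  qed
  then show ?thesis by (simp add: numeral_eq_enat)
qed

lemma walk_parity:
  assumes A: "\<forall>x y. (x, y) \<in> edges \<Gamma> \<longrightarrow> (x \<in> A \<longleftrightarrow> y \<notin> A)"
  shows "walk \<Gamma> xs \<Longrightarrow> ((hd xs \<in> A) \<longleftrightarrow> (last xs \<in> A)) \<longleftrightarrow> odd (length xs)"
proof (induction xs)
  case Nil then show ?case by (simp add: walk_def)
next
  case (Cons a xs)
  show ?case
  proof (cases xs)
    case Nil then show ?thesis by simp
  next
    case (Cons b ys)
    with Cons.prems have "adj \<Gamma> a b" "walk \<Gamma> xs" by (auto simp: walk_Cons2)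
    then show ?thesis using Cons.IH A \<open>xs = b # ys\<close> by (auto simp: adj_def)
  qed
qed

lemma verts_lex: "verts (lex_prod G H) = (SIGMA u:verts G. verts (H u))"
  by (simp add: verts_def lex_prod_def)

lemma adj_lex: "adj (lex_prod G H) (a, b) (c, d) \<longleftrightarrow>
   a \<in> verts G \<and> b \<in> verts (H a) \<and> c \<in> verts G \<and> d \<in> verts (H c) \<and>
   (adj G a c \<or> (a = c \<and> adj (H a) b d))"
  by (simp add: adj_def edges_def lex_prod_def)

lemma walk_proj:
  "walk (lex_prod G H) zs \<Longrightarrow> \<exists>ys. walk G ys \<and> hd ys = fst (hd zs) \<and> last ys = fst (last zs) \<and> length ys \<le> length zs"
proof (induction zs)
  case Nil then show ?case by (simp add: walk_def)
next
  case (Cons a zs)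
  show ?case
  proof (cases zs)
    case Nil
    then show ?thesis using Cons.prems by (rule_tac x="[fst a]" in exI) (auto simp: verts_lex)
  next
    case (Cons b rest)
    with Cons.prems have ab: "adj (lex_prod G H) a b" and w: "walk (lex_prod G H) zs" by (auto simp: walk_Cons2)
    from Cons.IH[OF w] obtain ys where ys: "walk G ys" "hd ys = fst (hd zs)" "last ys = fst (last zs)" "length ys \<le> length zs" by blast
    have yne: "ys \<noteq> []" using ys by (simp add: walk_def)
    obtain a1 a2 b1 b2 where ae: "a = (a1, a2)" and be: "b = (b1, b2)" by (cases a, cases b)
    from ab have "a1 \<in> verts G" "a1 = b1 \<or> adj G a1 b1" by (auto simp: ae be adj_lex)
    then show ?thesis
    proof (elim disjE)
      assume "a1 = b1" then show ?thesis using ys \<open>zs = b # rest\<close> ae be by (rule_tac x=ys in exI) auto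
    next
      assume "adj G a1 b1"
      have "walk G (hd ys # tl ys)" using ys(1) yne by simp
      then have "walk G (a1 # hd ys # tl ys)"
        using ys yne \<open>a1 \<in> verts G\<close> \<open>adj G a1 b1\<close> \<open>zs = b # rest\<close> be by (simp add: walk_Cons2)
      then show ?thesis using ys yne \<open>zs = b # rest\<close> ae be
        by (rule_tac x="a1 # ys" in exI) auto
    qed
  qed
qed

lemma dist_proj: "dist G (fst a) (fst b) \<le> dist (lex_prod G H) a b"
proof (cases "dist (lex_prod G H) a b")
  case (enat n)
  from dist_obtain[OF this] obtain zs where zs: "walk (lex_prod G H) zs" "hd zs = a" "last zs = b" "length zs = Suc n" by blast
  from walk_proj[OF zs(1)] obtain ys where ys: "walk G ys" "hd ys = fst (hd zs)" "last ys = fst (last zs)" "length ys \<le> length zs" by blast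
  have "dist G (fst a) (fst b) \<le> enat (length ys - 1)" using dist_le_walk[OF ys(1)] ys zs by simp
  also have "\<dots> \<le> enat n" using ys zs by simp
  finally show ?thesis using enat by simp
qed simp

lemma lift_walk:
  assumes ne: "\<forall>u\<in>verts G. verts (H u) \<noteq> {}"
    and gs: "walk G gs" "length gs = Suc m" and m: "m \<ge> 1"
    and y: "y \<in> verts (H (hd gs))" and v: "v \<in> verts (H (last gs))"
  shows "dist (lex_prod G H) (hd gs, y) (last gs, v) \<le> enat m"
proof -
  define f where "f j = (if j = 0 then y else if j = m then v else SOME z. z \<in> verts (H (gs ! j)))" for j
  define zs where "zs = map (\<lambda>j. (gs ! j, f j)) [0..<Suc m]"
  have gne: "gs \<noteq> []" using gs by auto
  have hd0: "gs ! 0 = hd gs" using gne by (simp add: hd_conv_nth)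
  have lastm: "gs ! m = last gs" using gne gs by (simp add: last_conv_nth)
  have mem: "gs ! j \<in> verts G \<and> f j \<in> verts (H (gs ! j))" if "j \<le> m" for j
  proof -
    have g: "gs ! j \<in> verts G" using gs that unfolding walk_def by (metis le_imp_less_Suc nth_mem subsetD)
    show ?thesis
    proof (cases "j = 0")
      case True then show ?thesis using g y hd0 by (simp add: f_def)
    next
      case False
      show ?thesis
      proof (cases "j = m")
        case True then show ?thesis using g v lastm False by (simp add: f_def)
      next
        case False2: False
        have "\<exists>z. z \<in> verts (H (gs ! j))" using ne g by auto
        then show ?thesis using g False False2 by (simp add: f_def) (rule someI_ex)
      qed
    qed
  qed
  have w: "walk (lex_prod G H) zs"
    unfolding walk_def
  proof (intro conjI allI impI)
    show "zs \<noteq> []" by (simp add: zs_def)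
    show "set zs \<subseteq> verts (lex_prod G H)"
      using mem by (auto simp: zs_def verts_lex)
  next
    fix i assume i: "Suc i < length zs"
    then have im: "Suc i \<le> m" by (simp add: zs_def)
    have "adj G (gs ! i) (gs ! Suc i)" using gs im unfolding walk_def by auto
    then show "adj (lex_prod G H) (zs ! i) (zs ! Suc i)"
      using mem[of i] mem[of "Suc i"] im
      by (simp add: zs_def adj_lex del: upt_Suc)
  qed
  have "hd zs = (hd gs, y)" using hd0 by (simp add: zs_def f_def hd_map del: upt_Suc)
  moreover have "last zs = (last gs, v)" using lastm m by (simp add: zs_def f_def last_map del: upt_Suc)
  moreover have "length zs = Suc m" by (simp add: zs_def)
  ultimately show ?thesis using dist_le_walk[OF w] by simp
qed

lemma finite_card_res:
  "finite (verts \<Gamma>) \<Longrightarrow> finite {card S | S. local_resolving \<Gamma> d S}"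
  by (rule finite_subset[of _ "{..card (verts \<Gamma>)}"])
     (auto simp: local_resolving_def intro: card_mono)

lemma verts_res: "simple_graph \<Gamma> \<Longrightarrow> local_resolving \<Gamma> (dist2 \<Gamma>) (verts \<Gamma>)"
  unfolding local_resolving_def
proof (intro conjI allI impI)
  fix x y assume s: "simple_graph \<Gamma>" and a: "adj \<Gamma> x y"
  then have xy: "x \<in> verts \<Gamma>" "y \<in> verts \<Gamma>" "x \<noteq> y"
    by (auto simp: simple_graph_def adj_def)
  then have "dist2 \<Gamma> x x \<noteq> dist2 \<Gamma> x y"
    using dist_refl[of x \<Gamma>] dist_adj[of x y \<Gamma>] a by (simp add: dist2_def)
  then show "\<exists>s\<in>verts \<Gamma>. dist2 \<Gamma> s x \<noteq> dist2 \<Gamma> s y" using xy by blast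
qed simp

lemma basis_ex: "simple_graph \<Gamma> \<Longrightarrow> \<exists>B. local_adj_basis \<Gamma> B"
proof -
  assume s: "simple_graph \<Gamma>"
  let ?M = "{card S | S. local_resolving \<Gamma> (dist2 \<Gamma>) S}"
  have "finite (verts \<Gamma>)" using s by (simp add: simple_graph_def)
  then have "finite ?M" by (rule finite_card_res)
  moreover have "?M \<noteq> {}" using verts_res[OF s] by blast
  ultimately have "Min ?M \<in> ?M" by (rule Min_in)
  then obtain B where "local_resolving \<Gamma> (dist2 \<Gamma>) B" "card B = Min ?M" by auto
  then show ?thesis unfolding local_adj_basis_def local_adj_dim_def by blast
qed

lemma adim_le: "simple_graph \<Gamma> \<Longrightarrow> local_resolving \<Gamma> (dist2 \<Gamma>) S \<Longrightarrow> local_adj_dim \<Gamma> \<le> card S"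
proof -
  assume s: "simple_graph \<Gamma>" and r: "local_resolving \<Gamma> (dist2 \<Gamma>) S"
  have "finite (verts \<Gamma>)" using s by (simp add: simple_graph_def)
  then have "finite {card S | S. local_resolving \<Gamma> (dist2 \<Gamma>) S}" by (rule finite_card_res)
  then show ?thesis unfolding local_adj_dim_def using r by (auto intro: Min_le)
qed

lemma dist2_val:
  assumes "simple_graph \<Gamma>" "a \<in> verts \<Gamma>" "b \<in> verts \<Gamma>"
  shows "dist2 \<Gamma> a b = (if a = b then 0 else if adj \<Gamma> a b then 1 else 2)"
  using dist_refl[of a \<Gamma>] dist_adj[of a b \<Gamma>] dist_nonadj[of a b \<Gamma>] assms
  by (auto simp: dist2_def min_def)

theorem mainTheorem5:
  fixes G :: "'a graph" and H :: "'a \<Rightarrow> 'b graph"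
  assumes "simple_graph G" and "connected G" and "bipartite G"
    and "card (verts G) \<ge> 2"
    and "\<forall>u\<in>verts G. simple_graph (H u)"
    and "\<exists>u\<in>verts G. \<not> classG (H u)"
  shows "local_metric_dim (lex_prod G H) = (\<Sum>u\<in>verts G. local_adj_dim (H u))"
proof -
  note sG = assms(1) and conG = assms(2) and bipG = assms(3) and cardG = assms(4) and sH = assms(5)
  let ?P = "lex_prod G H"
  obtain i where i: "i \<in> verts G" "\<not> classG (H i)" using assms(6) by blast
  have finG: "finite (verts G)" using sG by (simp add: simple_graph_def)
  have edG: "\<And>x y. adj G x y \<Longrightarrow> x \<in> verts G \<and> y \<in> verts G \<and> x \<noteq> y \<and> adj G y x"
    using sG by (auto simp: simple_graph_def adj_def)
  have edH: "\<And>u x y. u \<in> verts G \<Longrightarrow> adj (H u) x y \<Longrightarrow> x \<in> verts (H u) \<and> y \<in> verts (H u) \<and> x \<noteq> y \<and> adj (H u) y x"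
    using sH by (auto simp: simple_graph_def adj_def)
  have finH: "\<And>u. u \<in> verts G \<Longrightarrow> finite (verts (H u))" using sH by (simp add: simple_graph_def)
  have neH: "\<forall>u\<in>verts G. verts (H u) \<noteq> {}" using sH by (simp add: simple_graph_def)
  have finP: "finite (verts ?P)" using finG finH by (simp add: verts_lex)
  have nbr: "\<exists>u'. adj G u u'" if u: "u \<in> verts G" for u
  proof -
    have "\<not> verts G \<subseteq> {u}"
    proof
      assume "verts G \<subseteq> {u}"
      then have "card (verts G) \<le> card {u}" by (intro card_mono) auto
      then show False using cardG by simp
    qed
    then obtain w where w: "w \<in> verts G" "w \<noteq> u" by blast
    obtain n where "dist G u w = enat n" using conG u w unfolding connected_def by force
    from dist_obtain[OF this] obtain xs where xs: "walk G xs" "hd xs = u" "last xs = w" "length xs = Suc n" by blast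
    then have "n \<noteq> 0" using w by (cases xs) auto
    then have "adj G (xs ! 0) (xs ! 1)" using xs unfolding walk_def by auto
    moreover have "xs ! 0 = u" using xs by (cases xs) auto
    ultimately show ?thesis by blast
  qed
  have copy: "dist ?P (u, s) (u, x) = dist2 (H u) s x"
    if u: "u \<in> verts G" and s: "s \<in> verts (H u)" and x: "x \<in> verts (H u)" for u s x
  proof -
    have vP: "(u, s) \<in> verts ?P" "(u, x) \<in> verts ?P" using u s x by (auto simp: verts_lex)
    have aP: "adj ?P (u, s) (u, x) \<longleftrightarrow> adj (H u) s x" using u s x edG by (auto simp: adj_lex)
    have "dist ?P (u, s) (u, x) = (if s = x then 0 else if adj (H u) s x then 1 else 2)"
    proof (cases "s = x")
      case True then show ?thesis using dist_refl[OF vP(1)] by simp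
    next
      case False
      show ?thesis
      proof (cases "adj (H u) s x")
        case True then show ?thesis using dist_adj[OF _ _ vP] aP False by simp
      next
        case na: False
        have ge: "2 \<le> dist ?P (u, s) (u, x)" using dist_nonadj[of "(u,s)" "(u,x)" ?P] aP na False by simp
        obtain u' where u': "adj G u u'" using nbr[OF u] by blast
        then have u'v: "u' \<in> verts G" using edG by blast
        then obtain z where z: "z \<in> verts (H u')" using neH by blast
        have "walk ?P [(u, s), (u', z), (u, x)]"
          using u s x u' u'v z edG by (simp add: walk_Cons2 verts_lex adj_lex)
        from dist_le_walk[OF this] have "dist ?P (u, s) (u, x) \<le> 2" by (simp add: numeral_eq_enat numeral_2_eq_2)
        with ge have "dist ?P (u, s) (u, x) = 2" by simp
        then show ?thesis using False na by simp
      qed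
    qed
    then show ?thesis using dist2_val[of "H u" s x] sH u s x by simp
  qed
  have cross: "dist ?P (x, y) (u, v) = dist G x u"
    if x: "x \<in> verts G" and u: "u \<in> verts G" and xu: "x \<noteq> u"
      and y: "y \<in> verts (H x)" and v: "v \<in> verts (H u)" for x y u v
  proof -
    have ge: "dist G x u \<le> dist ?P (x, y) (u, v)" using dist_proj[of G "(x,y)" "(u,v)" H] by simp
    obtain n where n: "dist G x u = enat n" using conG x u unfolding connected_def by force
    from dist_obtain[OF this] obtain gs where gs: "walk G gs" "hd gs = x" "last gs = u" "length gs = Suc n" by blast
    have "n \<ge> 1" using gs xu by (cases gs) (auto split: if_splits simp: Suc_le_eq)
    from lift_walk[OF neH gs(1) gs(4) this, of y v] gs y v
    have "dist ?P (x, y) (u, v) \<le> enat n" by simp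
    with ge n show ?thesis by simp
  qed
  have bip: "dist G x u \<noteq> dist G x u'" if x: "x \<in> verts G" and a: "adj G u u'" for x u u'
  proof
    assume eq: "dist G x u = dist G x u'"
    from bipG obtain A where A: "\<forall>x y. (x, y) \<in> edges G \<longrightarrow> (x \<in> A \<longleftrightarrow> y \<notin> A)"
      unfolding bipartite_def by blast
    have uv: "u \<in> verts G" "u' \<in> verts G" using edG a by auto
    obtain n where n: "dist G x u = enat n" using conG x uv unfolding connected_def by force
    from dist_obtain[OF n] obtain xs where xs: "walk G xs" "hd xs = x" "last xs = u" "length xs = Suc n" by blast
    from dist_obtain[OF n[unfolded eq]] obtain ys where ys: "walk G ys" "hd ys = x" "last ys = u'" "length ys = Suc n" by blast
    have "(u \<in> A) \<longleftrightarrow> (u' \<notin> A)" using A a by (simp add: adj_def)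
    then show False using walk_parity[OF A xs(1)] walk_parity[OF A ys(1)] xs ys by auto
  qed
  have lower: "(\<Sum>u\<in>verts G. local_adj_dim (H u)) \<le> card S"
    if S: "local_resolving ?P (dist ?P) S" for S
  proof -
    define T where "T u = {s. (u, s) \<in> S}" for u
    have Ssub: "S \<subseteq> (SIGMA u:verts G. verts (H u))" using S by (simp add: local_resolving_def verts_lex)
    have Seq: "S = (SIGMA u:verts G. T u)" using Ssub by (auto simp: T_def)
    have finT: "\<forall>u\<in>verts G. finite (T u)"
      using Ssub finH by (auto simp: T_def intro: finite_subset[of _ "verts (H _)"])
    have cS: "card S = (\<Sum>u\<in>verts G. card (T u))" using finG finT by (simp add: Seq)
    have "local_adj_dim (H u) \<le> card (T u)" if u: "u \<in> verts G" for u
    proof (rule adim_le)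
      show "simple_graph (H u)" using sH u by blast
      show "local_resolving (H u) (dist2 (H u)) (T u)"
        unfolding local_resolving_def
      proof (intro conjI allI impI)
        show "T u \<subseteq> verts (H u)" using Ssub by (auto simp: T_def)
      next
        fix v w assume vw: "adj (H u) v w"
        then have vwv: "v \<in> verts (H u)" "w \<in> verts (H u)" using edH u by auto
        have "adj ?P (u, v) (u, w)" using vw vwv u by (simp add: adj_lex)
        then obtain p where p: "p \<in> S" "dist ?P p (u, v) \<noteq> dist ?P p (u, w)"
          using S unfolding local_resolving_def by blast
        obtain x y where pe: "p = (x, y)" by (cases p)
        have xy: "x \<in> verts G" "y \<in> verts (H x)" using Ssub p pe by auto
        show "\<exists>s\<in>T u. dist2 (H u) s v \<noteq> dist2 (H u) s w"
        proof (cases "x = u")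
          case True
          then show ?thesis using p pe xy copy[of u y v] copy[of u y w] vwv u
            by (auto simp: T_def)
        next
          case False
          then show ?thesis using p pe xy cross[of x u y v] cross[of x u y w] vwv u by auto
        qed
      qed
    qed
    then show ?thesis unfolding cS by (rule sum_mono)
  qed
  obtain Bi where Bi: "local_adj_basis (H i) Bi" "\<forall>v\<in>verts (H i). \<not> Bi \<subseteq> neighbors (H i) v"
    using i(2) unfolding classG_def by blast
  define B where "B u = (if u = i then Bi else SOME B. local_adj_basis (H u) B)" for u
  have Bb: "local_adj_basis (H u) (B u)" if u: "u \<in> verts G" for u
  proof (cases "u = i")
    case True then show ?thesis using Bi by (simp add: B_def)
  next
    case False
    have "\<exists>B. local_adj_basis (H u) B" using basis_ex sH u by blast
    then show ?thesis using False by (simp add: B_def) (rule someI_ex)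
  qed
  have Bsub: "B u \<subseteq> verts (H u)" if "u \<in> verts G" for u
    using Bb[OF that] by (simp add: local_adj_basis_def local_resolving_def)
  define W where "W = (SIGMA u:verts G. B u)"
  have cardW: "card W = (\<Sum>u\<in>verts G. local_adj_dim (H u))"
  proof -
    have "\<forall>u\<in>verts G. finite (B u)" using Bsub finH finite_subset by blast
    then have "card W = (\<Sum>u\<in>verts G. card (B u))" using finG by (simp add: W_def)
    also have "\<dots> = (\<Sum>u\<in>verts G. local_adj_dim (H u))"
      using Bb by (intro sum.cong) (auto simp: local_adj_basis_def)
    finally show ?thesis .
  qed
  have Wres: "local_resolving ?P (dist ?P) W"
    unfolding local_resolving_def
  proof (intro conjI allI impI)
    show "W \<subseteq> verts ?P" using Bsub by (auto simp: W_def verts_lex)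
  next
    fix p q assume pq: "adj ?P p q"
    obtain u v u' w where pe: "p = (u, v)" and qe: "q = (u', w)" by (cases p, cases q)
    have mem: "u \<in> verts G" "v \<in> verts (H u)" "u' \<in> verts G" "w \<in> verts (H u')"
      and cas: "adj G u u' \<or> (u = u' \<and> adj (H u) v w)"
      using pq by (auto simp: pe qe adj_lex)
    show "\<exists>s\<in>W. dist ?P s p \<noteq> dist ?P s q"
      using cas
    proof (elim disjE conjE)
      assume uu: "u = u'" and vw: "adj (H u) v w"
      obtain s where s: "s \<in> B u" "dist2 (H u) s v \<noteq> dist2 (H u) s w"
        using Bb[OF mem(1)] vw unfolding local_adj_basis_def local_resolving_def by blast
      have "s \<in> verts (H u)" using s Bsub mem by blast
      then show ?thesis using s copy[of u s v] copy[of u s w] mem uu pe qe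
        by (rule_tac x="(u, s)" in bexI) (auto simp: W_def)
    next
      assume a: "adj G u u'"
      have uu': "u \<noteq> u'" using edG a by blast
      have d1: "dist G u u' = 1" "dist G u' u = 1"
        using dist_adj[of u u' G] dist_adj[of u' u G] edG a mem by auto
      have Bi_i: "B i = Bi" by (simp add: B_def)
      have Bisub: "Bi \<subseteq> verts (H i)" using Bsub[OF i(1)] Bi_i by simp
      have spec: "\<exists>s\<in>Bi. dist ?P (i, s) (i, z) \<noteq> 1" if z: "z \<in> verts (H i)" for z
      proof -
        obtain s where s: "s \<in> Bi" "\<not> adj (H i) z s" using Bi(2) z by (auto simp: neighbors_def)
        have sv: "s \<in> verts (H i)" using s Bisub by blast
        have "\<not> adj (H i) s z" using s edH i(1) by blast
        then have "dist2 (H i) s z \<noteq> 1" using dist2_val[of "H i" s z] sH i(1) sv z by auto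
        then have "dist ?P (i, s) (i, z) \<noteq> 1" using copy[OF i(1) sv z] by simp
        then show ?thesis using s(1) by blast
      qed
      show ?thesis
      proof (cases "u = i")
        case True
        obtain s where s: "s \<in> Bi" "dist ?P (i, s) (i, v) \<noteq> 1" using spec mem True by blast
        have sv: "s \<in> verts (H i)" using s Bisub by blast
        have "dist ?P (i, s) (u', w) = 1" using cross[of i u' s w] i sv mem True uu' d1 by simp
        then show ?thesis using s True pe qe Bi_i i
          by (rule_tac x="(i, s)" in bexI) (auto simp: W_def)
      next
        case ui: False
        show ?thesis
        proof (cases "u' = i")
          case True
          obtain s where s: "s \<in> Bi" "dist ?P (i, s) (i, w) \<noteq> 1" using spec mem True by blast
          have sv: "s \<in> verts (H i)" using s Bisub by blast
          have "dist ?P (i, s) (u, v) = 1" using cross[of i u s v] i sv mem True uu' d1 by simp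
          then show ?thesis using s True pe qe Bi_i i
            by (rule_tac x="(i, s)" in bexI) (auto simp: W_def)
        next
          case u'i: False
          obtain z where z: "z \<in> verts (H i)" using neH i(1) by blast
          obtain s where s: "s \<in> Bi" using Bi(2) z by blast
          have sv: "s \<in> verts (H i)" using s Bisub by blast
          have "dist ?P (i, s) (u, v) = dist G i u" using cross[of i u s v] i sv mem ui by auto
          moreover have "dist ?P (i, s) (u', w) = dist G i u'" using cross[of i u' s w] i sv mem u'i by auto
          ultimately have "dist ?P (i, s) p \<noteq> dist ?P (i, s) q" using bip[OF i(1) a] pe qe by simp
          then show ?thesis using s Bi_i i by (rule_tac x="(i, s)" in bexI) (auto simp: W_def)
        qed
      qed
    qed
  qed
  let ?M = "{card S | S. local_resolving ?P (dist ?P) S}"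
  have finM: "finite ?M" using finP by (rule finite_card_res)
  have "card W \<in> ?M" using Wres by blast
  then have le: "Min ?M \<le> card W" using finM by (rule Min_le[rotated])
  have "Min ?M \<in> ?M" using finM \<open>card W \<in> ?M\<close> by (intro Min_in) auto
  then obtain S where "local_resolving ?P (dist ?P) S" "Min ?M = card S" by auto
  then have ge: "(\<Sum>u\<in>verts G. local_adj_dim (H u)) \<le> Min ?M" using lower by simp
  show ?thesis unfolding local_metric_dim_def using le ge cardW by simp
qed

end
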